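(* Let $\mathcal{S}$ be a finite thick generalized quadrangle of order $(s,t)$ with a group $G$ of automorphisms acting regularly on the points. Let $g\in G$ with $g^2\ne 1$, and let $\ell$ be a line with $\ell^g\sim\ell$. Then there are exactly two points $P$ incident with $\ell$ such that $P\sim P^g$, and for each of them the points $P,P^g,P^{g^{-1}}$ are not collinear.
   Context: A generalized quadrangle of order $(s,t)$: each line has $s+1$ points, each point is on $t+1$ lines, and for each non-incident point-line pair $(P,\ell)$ there is a unique point on $\ell$ collinear with $P$; thick means $\min\{s,t\}\ge2$. $P\sim Q$ means distinct collinear points; $\ell\sim m$ means distinct concurrent lines. *)

theory Defs
  imports Main
begin

definition pcollinear :: "('p \<Rightarrow> 'l \<Rightarrow> bool) \<Rightarrow> 'p \<Rightarrow> 'p \<Rightarrow> bool" where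
  "pcollinear I P Q \<longleftrightarrow> P \<noteq> Q \<and> (\<exists>l. I P l \<and> I Q l)"

definition lconcurrent :: "('p \<Rightarrow> 'l \<Rightarrow> bool) \<Rightarrow> 'l \<Rightarrow> 'l \<Rightarrow> bool" where
  "lconcurrent I l m \<longleftrightarrow> l \<noteq> m \<and> (\<exists>P. I P l \<and> I P m)"

definition collinear3 :: "('p \<Rightarrow> 'l \<Rightarrow> bool) \<Rightarrow> 'p \<Rightarrow> 'p \<Rightarrow> 'p \<Rightarrow> bool" where
  "collinear3 I P Q R \<longleftrightarrow> (\<exists>l. I P l \<and> I Q l \<and> I R l)"

definition GQ :: "('p::finite \<Rightarrow> 'l::finite \<Rightarrow> bool) \<Rightarrow> nat \<Rightarrow> nat \<Rightarrow> bool" where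
  "GQ I s t \<longleftrightarrow>
     (\<forall>l. card {P. I P l} = s + 1) \<and>
     (\<forall>P. card {l. I P l} = t + 1) \<and>
     (\<forall>P Q l m. P \<noteq> Q \<and> I P l \<and> I Q l \<and> I P m \<and> I Q m \<longrightarrow> l = m) \<and>
     (\<forall>P l. \<not> I P l \<longrightarrow> (\<exists>!Q. I Q l \<and> pcollinear I P Q))"

definition thick_GQ :: "('p::finite \<Rightarrow> 'l::finite \<Rightarrow> bool) \<Rightarrow> nat \<Rightarrow> nat \<Rightarrow> bool" where
  "thick_GQ I s t \<longleftrightarrow> GQ I s t \<and> min s t \<ge> 2"

definition automorphism :: "('p \<Rightarrow> 'l \<Rightarrow> bool) \<Rightarrow> ('p \<Rightarrow> 'p) \<times> ('l \<Rightarrow> 'l) \<Rightarrow> bool" where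
  "automorphism I g \<longleftrightarrow> bij (fst g) \<and> bij (snd g) \<and>
     (\<forall>P l. I (fst g P) (snd g l) \<longleftrightarrow> I P l)"

definition automorphism_group ::
  "('p \<Rightarrow> 'l \<Rightarrow> bool) \<Rightarrow> (('p \<Rightarrow> 'p) \<times> ('l \<Rightarrow> 'l)) set \<Rightarrow> bool" where
  "automorphism_group I G \<longleftrightarrow>
     (\<forall>g\<in>G. automorphism I g) \<and> (id, id) \<in> G \<and>
     (\<forall>g\<in>G. \<forall>h\<in>G. (fst g \<circ> fst h, snd g \<circ> snd h) \<in> G) \<and>
     (\<forall>g\<in>G. (inv (fst g), inv (snd g)) \<in> G)"

definition regular_on_points :: "(('p \<Rightarrow> 'p) \<times> ('l \<Rightarrow> 'l)) set \<Rightarrow> bool" where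
  "regular_on_points G \<longleftrightarrow> (\<forall>P Q. \<exists>!g. g \<in> G \<and> fst g P = Q)"

end

theory Submission
  imports Defs
begin

theorem lemma3p7:
  fixes I :: "'p::finite \<Rightarrow> 'l::finite \<Rightarrow> bool"
    and s t :: nat
    and G :: "(('p \<Rightarrow> 'p) \<times> ('l \<Rightarrow> 'l)) set"
    and g :: "('p \<Rightarrow> 'p) \<times> ('l \<Rightarrow> 'l)"
    and l :: 'l
  assumes "thick_GQ I s t"
    and "automorphism_group I G"
    and "regular_on_points G"
    and "g \<in> G"
    and "(fst g \<circ> fst g, snd g \<circ> snd g) \<noteq> (id, id)"
    and "lconcurrent I (snd g l) l"
  shows "card {P. I P l \<and> pcollinear I P (fst g P)} = 2 \<and>
         (\<forall>P. I P l \<and> pcollinear I P (fst g P) \<longrightarrow>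
              \<not> collinear3 I P (fst g P) (inv (fst g) P))"
proof -
  define f where "f = fst g"
  define h where "h = snd g"
  have GQ: "GQ I s t" using assms(1) unfolding thick_GQ_def by blast
  have ax3: "\<And>P Q l m. P \<noteq> Q \<Longrightarrow> I P l \<Longrightarrow> I Q l \<Longrightarrow> I P m \<Longrightarrow> I Q m \<Longrightarrow> l = m"
    using GQ unfolding GQ_def by blast
  have ax4: "\<And>P l. \<not> I P l \<Longrightarrow> \<exists>!Q. I Q l \<and> pcollinear I P Q"
    using GQ unfolding GQ_def by blast
  have aut: "automorphism I g" using assms(2,4) unfolding automorphism_group_def by blast
  have bf: "bij f" and inc: "\<And>P m. I (f P) (h m) \<longleftrightarrow> I P m"
    using aut unfolding automorphism_def f_def h_def by auto
  have finv: "\<And>P. f (inv f P) = P" using bf by (simp add: bij_is_surj surj_f_inv_f)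
  have fp: "\<And>P. f P \<noteq> P"
  proof
    fix P assume "f P = P"
    have "(id,id) \<in> G" using assms(2) unfolding automorphism_group_def by blast
    hence "g = (id,id)" using assms(3,4) \<open>f P = P\<close> unfolding regular_on_points_def f_def
      by (metis fst_conv id_apply)
    thus False using assms(5) by simp
  qed
  obtain X where X1: "I X (h l)" and X2: "I X l" and hl: "h l \<noteq> l"
    using assms(6) unfolding lconcurrent_def h_def by blast
  define Y where "Y = inv f X"
  have fY: "f Y = X" using finv Y_def by simp
  have Yl: "I Y l" using inc[of Y l] fY X1 by simp
  have XY: "X \<noteq> Y" using fY fp by metis
  have fXl: "I (f X) (h l)" using inc X2 by simp
  have fXX: "f X \<noteq> X" using fp by simp
  have only: "\<And>P m n. P \<noteq> X \<Longrightarrow> I P l \<Longrightarrow> I P (h l) \<Longrightarrow> False"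
    using ax3 X1 X2 hl by metis
  have S: "{P. I P l \<and> pcollinear I P (f P)} = {X, Y}"
  proof (intro equalityI subsetI)
    fix P assume "P \<in> {P. I P l \<and> pcollinear I P (f P)}"
    hence Pl: "I P l" and Pc: "pcollinear I P (f P)" by auto
    show "P \<in> {X, Y}"
    proof (rule ccontr)
      assume "P \<notin> {X, Y}"
      hence PX: "P \<noteq> X" and PY: "P \<noteq> Y" by auto
      have fPX: "f P \<noteq> X" using PY fY bf by (metis bij_is_inj injD)
      have fPl: "I (f P) (h l)" using inc Pl by simp
      have nfPl: "\<not> I (f P) l" using only[OF fPX] fPl by blast
      have c1: "I P l \<and> pcollinear I (f P) P" using Pl Pc unfolding pcollinear_def by auto
      have c2: "I X l \<and> pcollinear I (f P) X" using X2 X1 fPl fPX unfolding pcollinear_def by blast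
      show False using ax4[OF nfPl] c1 c2 PX by blast
    qed
  next
    fix P assume "P \<in> {X, Y}"
    thus "P \<in> {P. I P l \<and> pcollinear I P (f P)}"
    proof
      assume "P = X" thus ?thesis using X2 X1 fXl fXX unfolding pcollinear_def by auto
    next
      assume "P \<in> {Y}" thus ?thesis using Yl X2 fY XY unfolding pcollinear_def by auto
    qed
  qed
  have card: "card {X, Y} = 2" using XY by simp
  have nc: "\<not> collinear3 I P (f P) (inv f P)" if "P \<in> {X, Y}" for P
  proof
    assume "collinear3 I P (f P) (inv f P)"
    then obtain n where n1: "I P n" and n2: "I (f P) n" and n3: "I (inv f P) n"
      unfolding collinear3_def by blast
    show False
    proof (cases "P = X")
      case True
      have "n = h l" using ax3[OF fXX[symmetric]] n1 n2 X1 fXl True by metis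
      moreover have "n = l" using ax3[OF XY] n1 n3 X2 Yl True Y_def by metis
      ultimately show False using hl by simp
    next
      case False
      hence PY: "P = Y" using that by simp
      have "n = l" using ax3[OF XY] n1 n2 X2 Yl PY fY by metis
      hence "I (inv f Y) l" using n3 PY by simp
      hence "I Y (h l)" using inc[of "inv f Y" l] finv by simp
      thus False using only[OF XY[symmetric]] Yl by blast
    qed
  qed
  show ?thesis using S card nc unfolding f_def by auto
qed

end
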